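(* Let $(M,\Sigma)$ be a measurable space, $r\ge1$, $\psi_1,\dots,\psi_r\colon\Sigma\to\mathbb{R}$ non-atomic countably additive charges, and $X\in\Sigma$ a set such that for each $i$ either $\psi_i(A)\ge0$ for all measurable $A\subseteq X$, or $\psi_i(A)\le0$ for all measurable $A\subseteq X$. Let $I^+$ be the set of indices $i$ for which $\psi_i(A)\ge0$ for all measurable $A\subseteq X$ (and $I^-$ the remaining indices, for which $\psi_i\le 0$ on subsets of $X$). If $I^+\neq\emptyset$, then $X$ has a strong solution, i.e. there is a partition $X=F_1\sqcup\dots\sqcup F_r$ into measurable sets with $\psi_i(F_i)\ge\psi_i(F_j)$ for all $i,j$.
   Context: A charge is a countably additive real-valued signed measure; it is non-atomic if the positive and negative parts $\mu^+,\mu^-$ of its Hahn–Jordan decomposition $\psi=\mu^+-\mu^-$ are non-atomic measures. Partition elements may be empty. *)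

theory Defs
  imports "HOL-Analysis.Analysis"
begin

definition is_charge :: "'a measure \<Rightarrow> ('a set \<Rightarrow> real) \<Rightarrow> bool" where
  "is_charge M \<psi> \<longleftrightarrow> \<psi> {} = 0 \<and>
     (\<forall>A :: nat \<Rightarrow> 'a set. range A \<subseteq> sets M \<longrightarrow> disjoint_family A \<longrightarrow>
        (\<lambda>n. \<psi> (A n)) sums \<psi> (\<Union>n. A n))"

definition pos_part :: "'a measure \<Rightarrow> ('a set \<Rightarrow> real) \<Rightarrow> 'a set \<Rightarrow> real" where
  "pos_part M \<psi> A = Sup {\<psi> B | B. B \<in> sets M \<and> B \<subseteq> A}"

definition neg_part :: "'a measure \<Rightarrow> ('a set \<Rightarrow> real) \<Rightarrow> 'a set \<Rightarrow> real" where
  "neg_part M \<psi> A = Sup {- \<psi> B | B. B \<in> sets M \<and> B \<subseteq> A}"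

definition is_atom :: "'a measure \<Rightarrow> ('a set \<Rightarrow> real) \<Rightarrow> 'a set \<Rightarrow> bool" where
  "is_atom M \<mu> A \<longleftrightarrow> A \<in> sets M \<and> \<mu> A > 0 \<and>
     (\<forall>B \<in> sets M. B \<subseteq> A \<longrightarrow> \<mu> B = 0 \<or> \<mu> B = \<mu> A)"

definition nonatomic_measure :: "'a measure \<Rightarrow> ('a set \<Rightarrow> real) \<Rightarrow> bool" where
  "nonatomic_measure M \<mu> \<longleftrightarrow> (\<nexists>A. is_atom M \<mu> A)"

definition nonatomic_charge :: "'a measure \<Rightarrow> ('a set \<Rightarrow> real) \<Rightarrow> bool" where
  "nonatomic_charge M \<psi> \<longleftrightarrow> is_charge M \<psi> \<and>
     nonatomic_measure M (pos_part M \<psi>) \<and> nonatomic_measure M (neg_part M \<psi>)"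

end

theory Submission
  imports Defs
begin

lemma charge_empty: "is_charge M f \<Longrightarrow> f {} = 0"
  by (simp add: is_charge_def)

lemma charge_Un:
  assumes c: "is_charge M f" and A: "A \<in> sets M" and B: "B \<in> sets M" and d: "A \<inter> B = {}"
  shows "f (A \<union> B) = f A + f B"
proof -
  define D where "D n = (if n = 0 then A else if n = 1 then B else {})" for n :: nat
  have r: "range D \<subseteq> sets M" using A B by (auto simp: D_def)
  have df: "disjoint_family D" using d by (auto simp: disjoint_family_on_def D_def)
  have U: "(\<Union>n. D n) = A \<union> B"
  proof
    show "(\<Union>n. D n) \<subseteq> A \<union> B" by (auto simp: D_def split: if_splits)
    show "A \<union> B \<subseteq> (\<Union>n. D n)"
    proof
      fix x assume "x \<in> A \<union> B"
      then have "x \<in> D 0 \<or> x \<in> D 1" by (auto simp: D_def)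
      then show "x \<in> (\<Union>n. D n)" by blast
    qed
  qed
  have s1: "(\<lambda>n. f (D n)) sums f (\<Union>n. D n)" using c r df unfolding is_charge_def by blast
  then have s1: "(\<lambda>n. f (D n)) sums f (A \<union> B)" using U by simp
  have s2: "(\<lambda>n. f (D n)) sums (\<Sum>n\<in>{0,1}. f (D n))"
    by (rule sums_finite) (auto simp: D_def charge_empty[OF c])
  have "f (A \<union> B) = (\<Sum>n\<in>{0,1}. f (D n))" using s1 s2 sums_unique2 by blast
  also have "\<dots> = f A + f B" by (simp add: D_def)
  finally show ?thesis .
qed

lemma charge_diff:
  assumes c: "is_charge M f" and A: "A \<in> sets M" and B: "B \<in> sets M" and s: "B \<subseteq> A"
  shows "f (A - B) = f A - f B"
proof -
  have "f ((A - B) \<union> B) = f (A - B) + f B" using A B by (intro charge_Un[OF c]) auto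
  moreover have "(A - B) \<union> B = A" using s by auto
  ultimately show ?thesis by simp
qed

lemma charge_finite_Union:
  assumes c: "is_charge M f" and fin: "finite P" and Ps: "P \<subseteq> sets M" and d: "disjoint P"
  shows "f (\<Union>P) = (\<Sum>p\<in>P. f p)"
  using fin Ps d
proof (induction P rule: finite_induct)
  case empty then show ?case by (simp add: charge_empty[OF c])
next
  case (insert p P)
  have d2: "disjoint P" using insert.prems(2) by (auto simp: disjoint_def)
  have "p \<inter> \<Union>P = {}" using insert.prems(2) insert.hyps(2) by (auto simp: disjoint_def)
  moreover have "\<Union>P \<in> sets M" using insert.prems(1) insert.hyps(1) by (intro sets.finite_Union) auto
  ultimately have "f (\<Union>(insert p P)) = f p + f (\<Union>P)"
    using insert.prems(1) by (simp add: charge_Un[OF c])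
  then show ?case using insert d2 by simp
qed

lemma charge_incseq:
  assumes c: "is_charge M f" and inc: "incseq S" and r: "range S \<subseteq> sets M"
  shows "(\<lambda>n. f (S n)) \<longlonglongrightarrow> f (\<Union>n. S n)"
proof -
  define D where "D = disjointed S"
  have Dm: "D n \<in> sets M" for n
    unfolding D_def disjointed_def using r by (intro sets.Diff sets.finite_UN) auto
  have "(\<lambda>n. f (D n)) sums f (\<Union>n. D n)"
    using c Dm disjoint_family_disjointed[of S] unfolding is_charge_def D_def by blast
  then have s: "(\<lambda>n. f (D n)) sums f (\<Union>n. S n)"
    using UN_disjointed_eq[of S] by (simp add: D_def)
  have ps: "(\<Sum>i<n. f (D i)) = f (\<Union>i\<in>{0..<n}. S i)" for n
  proof (induction n)
    case 0 then show ?case by (simp add: charge_empty[OF c])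
  next
    case (Suc n)
    have "(\<Union>i\<in>{0..<Suc n}. S i) = (\<Union>i\<in>{0..<n}. S i) \<union> D n"
      using finite_UN_disjointed_eq[of S "Suc n"] finite_UN_disjointed_eq[of S n]
      by (auto simp: D_def atLeastLessThanSuc)
    moreover have "(\<Union>i\<in>{0..<n}. S i) \<inter> D n = {}"
      by (auto simp: D_def disjointed_def)
    moreover have "(\<Union>i\<in>{0..<n}. S i) \<in> sets M" using r by (intro sets.finite_UN) auto
    ultimately show ?case using Suc Dm by (simp add: charge_Un[OF c])
  qed
  have e: "(\<Union>i\<in>{0..<Suc n}. S i) = S n" for n
    using inc by (auto simp: incseq_def atLeastLessThanSuc_atLeastAtMost) blast
  have "(\<lambda>n. \<Sum>i<n. f (D i)) \<longlonglongrightarrow> f (\<Union>n. S n)" using s by (simp add: sums_def)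
  then have "(\<lambda>n. \<Sum>i<Suc n. f (D i)) \<longlonglongrightarrow> f (\<Union>n. S n)" by (rule LIMSEQ_Suc)
  then show ?thesis using ps e by simp
qed

lemma charge_sum:
  assumes "finite P" "\<And>i. i \<in> P \<Longrightarrow> is_charge M (g i)"
  shows "is_charge M (\<lambda>A. \<Sum>i\<in>P. g i A)"
  using assms unfolding is_charge_def by (auto intro!: sums_sum)

locale nnc =
  fixes M :: "'a measure" and X :: "'a set" and f :: "'a set \<Rightarrow> real"
  assumes X: "X \<in> sets M" and c: "is_charge M f"
  and nn: "\<And>A. A \<in> sets M \<Longrightarrow> A \<subseteq> X \<Longrightarrow> f A \<ge> 0"
  and na: "\<And>A. A \<in> sets M \<Longrightarrow> A \<subseteq> X \<Longrightarrow> f A > 0 \<Longrightarrow> \<exists>B\<in>sets M. B \<subseteq> A \<and> f B \<noteq> 0 \<and> f B \<noteq> f A"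
begin

lemma mono: "A \<in> sets M \<Longrightarrow> B \<in> sets M \<Longrightarrow> B \<subseteq> A \<Longrightarrow> A \<subseteq> X \<Longrightarrow> f B \<le> f A"
  using charge_diff[OF c, of A B] nn[of "A - B"] by auto

lemma halve:
  assumes A: "A \<in> sets M" "A \<subseteq> X" "f A > 0"
  shows "\<exists>B\<in>sets M. B \<subseteq> A \<and> 0 < f B \<and> f B \<le> f A / 2"
proof -
  obtain B where B: "B \<in> sets M" "B \<subseteq> A" "f B \<noteq> 0" "f B \<noteq> f A" using na[OF A] by blast
  have "f B \<ge> 0" using nn[of B] B A by auto
  then have b: "f B > 0" using B by auto
  have d: "f (A - B) = f A - f B" using charge_diff[OF c A(1) B(1) B(2)] .
  have "f B \<le> f A" using mono[OF A(1) B(1) B(2) A(2)] .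
  then have "f (A - B) > 0" using d B by auto
  show ?thesis
  proof (cases "f B \<le> f A / 2")
    case True then show ?thesis using B b by blast
  next
    case False
    then have "f (A - B) \<le> f A / 2" using d by auto
    then show ?thesis using \<open>f (A - B) > 0\<close> A B by (intro bexI[of _ "A - B"]) auto
  qed
qed

lemma small_pow:
  assumes A: "A \<in> sets M" "A \<subseteq> X" "f A > 0"
  shows "\<exists>B\<in>sets M. B \<subseteq> A \<and> 0 < f B \<and> f B \<le> f A / 2 ^ m"
proof (induction m)
  case 0 then show ?case using A by auto
next
  case (Suc m)
  then obtain B where B: "B \<in> sets M" "B \<subseteq> A" "0 < f B" "f B \<le> f A / 2 ^ m" by blast
  obtain C where C: "C \<in> sets M" "C \<subseteq> B" "0 < f C" "f C \<le> f B / 2"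
    using halve[of B] B A by blast
  have "(f C * 2) * 2 ^ m \<le> f B * 2 ^ m" using C(4) by (intro mult_right_mono) auto
  moreover have "f B * 2 ^ m \<le> f A" using B(4) by (simp add: field_simps)
  ultimately have "f C * (2 * 2 ^ m) \<le> f A" by (metis mult.assoc order_trans)
  then have "f C \<le> f A / 2 ^ Suc m" by (simp add: field_simps)
  then show ?case using B C by blast
qed

lemma small:
  assumes A: "A \<in> sets M" "A \<subseteq> X" "f A > 0" and e: "e > 0"
  shows "\<exists>B\<in>sets M. B \<subseteq> A \<and> 0 < f B \<and> f B \<le> e"
proof -
  obtain m where m: "f A / e < 2 ^ m" using real_arch_pow[of 2 "f A / e"] by auto
  have "f A < 2 ^ m * e" using m e by (simp add: divide_less_eq)
  then have le: "f A / 2 ^ m \<le> e" by (simp add: divide_le_eq mult.commute)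
  obtain B where B: "B \<in> sets M" "B \<subseteq> A" "0 < f B" "f B \<le> f A / 2 ^ m"
    using small_pow[OF A, of m] by blast
  have "f B \<le> e" using B(4) le by linarith
  then show ?thesis using B by blast
qed

lemma sierp:
  assumes G: "G \<in> sets M" "G \<subseteq> X" and a: "0 \<le> a" "a \<le> f G"
  shows "\<exists>F\<in>sets M. F \<subseteq> G \<and> f F = a"
proof -
  define av where "av S = {f F | F. F \<in> sets M \<and> F \<subseteq> G - S \<and> f S + f F \<le> a}" for S
  define sg where "sg S = Sup (av S)" for S
  define P where "P S \<longleftrightarrow> S \<in> sets M \<and> S \<subseteq> G \<and> f S \<le> a" for S
  have avne: "0 \<in> av S" if "P S" for S
    using that charge_empty[OF c] unfolding av_def P_def by (intro CollectI exI[of _ "{}"]) auto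
  have avbdd: "bdd_above (av S)" if "P S" for S
    unfolding av_def by (rule bdd_aboveI[of _ "a - f S"]) auto
  have sgub: "x \<le> sg S" if "P S" "x \<in> av S" for S x
    unfolding sg_def using avbdd[OF that(1)] that(2) by (rule cSup_upper[rotated])
  have step: "\<exists>S'. P S' \<and> S \<subseteq> S' \<and> sg S \<le> 2 * (f S' - f S)" if PS: "P S" for S
  proof (cases "sg S \<le> 0")
    case True then show ?thesis using PS by (intro exI[of _ S]) auto
  next
    case False
    then have "sg S / 2 < Sup (av S)" by (simp add: sg_def)
    then obtain x where x: "x \<in> av S" "sg S / 2 < x" using less_cSupD[of "av S"] avne[OF PS] by blast
    then obtain F where F: "F \<in> sets M" "F \<subseteq> G - S" "f S + f F \<le> a" "x = f F"
      unfolding av_def by blast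
    have u: "f (S \<union> F) = f S + f F" using PS F by (intro charge_Un[OF c]) (auto simp: P_def)
    show ?thesis using PS F u x by (intro exI[of _ "S \<union> F"]) (auto simp: P_def)
  qed
  have P0: "P {}" using a charge_empty[OF c] by (simp add: P_def)
  obtain Sq where Sq: "\<And>n. P (Sq n) \<and> Sq n \<subseteq> Sq (Suc n) \<and> sg (Sq n) \<le> 2 * (f (Sq (Suc n)) - f (Sq n))"
    using dependent_nat_choice[of "\<lambda>n S. P S" "\<lambda>n S S'. S \<subseteq> S' \<and> sg S \<le> 2 * (f S' - f S)"] P0 step
    by blast
  define L where "L = (\<Union>n. Sq n)"
  have inc: "incseq Sq" using Sq by (intro incseq_SucI) auto
  have rS: "range Sq \<subseteq> sets M" using Sq by (auto simp: P_def)
  have Lm: "L \<in> sets M" using rS unfolding L_def by auto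
  have LG: "L \<subseteq> G" using Sq by (auto simp: P_def L_def)
  have lim: "(\<lambda>n. f (Sq n)) \<longlonglongrightarrow> f L" unfolding L_def by (rule charge_incseq[OF c inc rS])
  have La: "f L \<le> a" using lim by (rule LIMSEQ_le_const2) (use Sq in \<open>auto simp: P_def\<close>)
  have le: "f (Sq n) \<le> f L" for n using mono[OF Lm, of "Sq n"] rS LG G by (auto simp: L_def)
  show ?thesis
  proof (cases "f L = a")
    case True then show ?thesis using Lm LG by blast
  next
    case False
    then have lt: "f L < a" using La by auto
    have d: "f (G - L) = f G - f L" by (rule charge_diff[OF c G(1) Lm LG])
    obtain H where H: "H \<in> sets M" "H \<subseteq> G - L" "0 < f H" "f H \<le> a - f L"
      using small[of "G - L" "a - f L"] d a lt G Lm by auto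
    have "f H \<le> 2 * (f (Sq (Suc n)) - f (Sq n))" for n
    proof -
      have Hs: "H \<subseteq> G - Sq n" using H(2) by (auto simp: L_def)
      have "f H \<in> av (Sq n)" unfolding av_def using H le[of n] Hs by (intro CollectI exI[of _ H]) auto
      then have "f H \<le> sg (Sq n)" using sgub Sq by blast
      then show ?thesis using Sq[of n] by linarith
    qed
    moreover have "(\<lambda>n. 2 * (f (Sq (Suc n)) - f (Sq n))) \<longlonglongrightarrow> 2 * (f L - f L)"
      by (intro tendsto_intros LIMSEQ_Suc lim)
    ultimately have "f H \<le> 2 * (f L - f L)" by (intro LIMSEQ_le_const) auto
    then show ?thesis using H by simp
  qed
qed

definition "part_ok G d Q \<longleftrightarrow> finite Q \<and> Q \<subseteq> sets M \<and> disjoint Q \<and> \<Union>Q = G \<and> {} \<notin> Q \<and> (\<forall>q\<in>Q. f q \<le> d)"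

lemma part_single:
  assumes "G \<in> sets M" "f G \<le> d" shows "part_ok G d ({G} - {{}})"
  using assms unfolding part_ok_def disjoint_def by auto

lemma part_ind:
  assumes d: "d > 0"
  shows "G \<in> sets M \<Longrightarrow> G \<subseteq> X \<Longrightarrow> f G \<le> real m * d \<Longrightarrow> \<exists>Q. part_ok G d Q"
proof (induction m arbitrary: G)
  case 0
  then show ?case using d part_single[of G d] by auto
next
  case (Suc m)
  show ?case
  proof (cases "f G \<le> d")
    case True then show ?thesis using part_single[of G d] Suc.prems by blast
  next
    case False
    then obtain F where F: "F \<in> sets M" "F \<subseteq> G" "f F = d" using sierp[of G d] Suc.prems d by auto
    have dd: "f (G - F) = f G - d" using charge_diff[OF c Suc.prems(1) F(1) F(2)] F by simp
    then have "f (G - F) \<le> real m * d" using Suc.prems(3) by (simp add: algebra_simps)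
    moreover have "G - F \<in> sets M" "G - F \<subseteq> X" using Suc.prems F by auto
    ultimately obtain Q where Q: "part_ok (G - F) d Q" using Suc.IH by blast
    have Fne: "F \<noteq> {}" using F d charge_empty[OF c] by auto
    have "\<Union>Q = G - F" using Q by (simp add: part_ok_def)
    then have "disjoint (insert F Q)" using Q unfolding disjoint_def part_ok_def by blast
    moreover have "\<Union>(insert F Q) = G" using \<open>\<Union>Q = G - F\<close> F by auto
    ultimately have "part_ok G d (insert F Q)" using Q F Fne d unfolding part_ok_def by auto
    then show ?thesis by blast
  qed
qed

lemma partition:
  assumes G: "G \<in> sets M" "G \<subseteq> X" and d: "d > 0"
  shows "\<exists>Q. finite Q \<and> Q \<subseteq> sets M \<and> disjoint Q \<and> \<Union>Q = G \<and> {} \<notin> Q \<and> (\<forall>q\<in>Q. f q \<le> d)"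
proof -
  obtain m where "f G / d \<le> real m" using real_arch_simple by blast
  then have "f G \<le> real m * d" using d by (simp add: field_simps)
  then show ?thesis using part_ind[OF d G] unfolding part_ok_def by blast
qed

end

lemma dep_exists:
  fixes v :: "'b \<Rightarrow> nat \<Rightarrow> real"
  assumes "finite J"
  shows "finite F \<Longrightarrow> card J < card F \<Longrightarrow> \<exists>a. (\<exists>p\<in>F. a p \<noteq> 0) \<and> (\<forall>i\<in>J. (\<Sum>p\<in>F. a p * v p i) = 0)"
  using assms
proof (induction J arbitrary: F v rule: finite_induct)
  case empty
  then obtain p where "p \<in> F" by (metis card.empty card_gt_0_iff ex_in_conv)
  then show ?case by (intro exI[of _ "\<lambda>q. 1"]) auto
next
  case (insert j J)
  have cJ: "card J < card F" using insert by simp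
  show ?case
  proof (cases "\<forall>p\<in>F. v p j = 0")
    case True
    obtain a where a: "\<exists>p\<in>F. a p \<noteq> 0" "\<forall>i\<in>J. (\<Sum>p\<in>F. a p * v p i) = 0"
      using insert.IH[OF insert.prems(1) cJ] by blast
    have "(\<Sum>p\<in>F. a p * v p j) = 0" using True by simp
    then show ?thesis using a by auto
  next
    case False
    then obtain p0 where p0: "p0 \<in> F" "v p0 j \<noteq> 0" by blast
    define F' where "F' = F - {p0}"
    have fF': "finite F'" using insert.prems by (simp add: F'_def)
    have cF': "card J < card F'" using insert.prems(2) insert.hyps p0 by (simp add: F'_def)
    define v' where "v' p i = v p i - (v p j / v p0 j) * v p0 i" for p i
    obtain b where b: "\<exists>p\<in>F'. b p \<noteq> 0" "\<forall>i\<in>J. (\<Sum>p\<in>F'. b p * v' p i) = 0"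
      using insert.IH[OF fF' cF', of v'] by blast
    define sj where "sj = (\<Sum>p\<in>F'. b p * v p j)"
    define a where "a = b(p0 := - sj / v p0 j)"
    have split: "(\<Sum>p\<in>F. a p * v p i) = a p0 * v p0 i + (\<Sum>p\<in>F'. b p * v p i)" for i
    proof -
      have "(\<Sum>p\<in>F. a p * v p i) = a p0 * v p0 i + (\<Sum>p\<in>F'. a p * v p i)"
        using p0 insert.prems(1) unfolding F'_def by (simp add: sum.remove)
      moreover have "(\<Sum>p\<in>F'. a p * v p i) = (\<Sum>p\<in>F'. b p * v p i)"
        by (rule sum.cong) (auto simp: a_def F'_def)
      ultimately show ?thesis by simp
    qed
    have ex: "(\<Sum>p\<in>F'. b p * v p i) = (\<Sum>p\<in>F'. b p * v' p i) + (v p0 i / v p0 j) * sj" for i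
    proof -
      have "(\<Sum>p\<in>F'. b p * v' p i) = (\<Sum>p\<in>F'. b p * v p i - (v p0 i / v p0 j) * (b p * v p j))"
        by (rule sum.cong) (auto simp: v'_def algebra_simps)
      also have "\<dots> = (\<Sum>p\<in>F'. b p * v p i) - (v p0 i / v p0 j) * sj"
        by (simp add: sum_subtractf sum_distrib_left sj_def)
      finally show ?thesis by simp
    qed
    have "\<forall>i\<in>insert j J. (\<Sum>p\<in>F. a p * v p i) = 0"
    proof
      fix i assume i: "i \<in> insert j J"
      have ap0: "a p0 = - sj / v p0 j" by (simp add: a_def)
      show "(\<Sum>p\<in>F. a p * v p i) = 0"
      proof (cases "i = j")
        case True
        then show ?thesis using split[of j] p0(2) by (simp add: ap0 sj_def)
      next
        case False
        then have "i \<in> J" using i by auto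
        then have "(\<Sum>p\<in>F'. b p * v p i) = (v p0 i / v p0 j) * sj" using ex[of i] b(2) by simp
        then show ?thesis using split[of i] by (simp add: ap0 field_simps)
      qed
    qed
    moreover have "\<exists>p\<in>F. a p \<noteq> 0" using b(1) by (auto simp: a_def F'_def)
    ultimately show ?thesis by blast
  qed
qed

lemma vertex_aux:
  fixes v :: "'b \<Rightarrow> nat \<Rightarrow> real"
  assumes J: "finite J" and F: "finite F"
  shows "\<forall>x. card {p\<in>F. 0 < (x p::real) \<and> x p < 1} = n \<longrightarrow> (\<forall>p\<in>F. 0 \<le> x p \<and> x p \<le> 1) \<longrightarrow>
    (\<exists>y. (\<forall>p\<in>F. 0 \<le> y p \<and> y p \<le> 1) \<and> (\<forall>i\<in>J. (\<Sum>p\<in>F. y p * v p i) = (\<Sum>p\<in>F. x p * v p i))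
       \<and> card {p\<in>F. 0 < y p \<and> y p < 1} \<le> card J)"
proof (induction n rule: less_induct)
  case (less n)
  show ?case
  proof (intro allI impI)
    fix x :: "'b \<Rightarrow> real" assume n: "card {p\<in>F. 0 < x p \<and> x p < 1} = n" and x: "\<forall>p\<in>F. 0 \<le> x p \<and> x p \<le> 1"
    define Fr where "Fr = {p\<in>F. 0 < x p \<and> x p < 1}"
    have fFr: "finite Fr" using F by (simp add: Fr_def)
    show "\<exists>y. (\<forall>p\<in>F. 0 \<le> y p \<and> y p \<le> 1) \<and> (\<forall>i\<in>J. (\<Sum>p\<in>F. y p * v p i) = (\<Sum>p\<in>F. x p * v p i))
       \<and> card {p\<in>F. 0 < y p \<and> y p < 1} \<le> card J"
    proof (cases "card Fr \<le> card J")
      case True then show ?thesis using x by (intro exI[of _ x]) (auto simp: Fr_def)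
    next
      case False
      then obtain a where a: "\<exists>p\<in>Fr. a p \<noteq> 0" "\<forall>i\<in>J. (\<Sum>p\<in>Fr. a p * v p i) = 0"
        using dep_exists[OF J fFr, of v] by auto
      define Z where "Z = {p\<in>Fr. a p \<noteq> 0}"
      have fZ: "finite Z" "Z \<noteq> {}" using fFr a(1) by (auto simp: Z_def)
      define bnd where "bnd p = (if a p > 0 then (1 - x p) / a p else - x p / a p)" for p
      define s where "s = Min (bnd ` Z)"
      have "s \<in> bnd ` Z" unfolding s_def using fZ by (intro Min_in) auto
      then obtain ps where ps: "ps \<in> Z" "bnd ps = s" by auto
      have s0: "0 < s"
      proof -
        have q: "0 < x ps" "x ps < 1" "a ps \<noteq> 0" using ps(1) by (auto simp: Z_def Fr_def)
        have "0 < bnd ps"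
        proof (cases "a ps > 0")
          case True then show ?thesis using q by (simp add: bnd_def)
        next
          case False then have "a ps < 0" using q by auto
          then show ?thesis using q by (simp add: bnd_def divide_pos_neg)
        qed
        then show ?thesis using ps(2) by simp
      qed
      have sle: "s \<le> bnd p" if "p \<in> Z" for p using fZ that unfolding s_def by auto
      define a' where "a' p = (if p \<in> Fr then a p else 0)" for p
      define x' where "x' p = x p + s * a' p" for p
      have bounds: "\<forall>p\<in>F. 0 \<le> x' p \<and> x' p \<le> 1"
      proof
        fix p assume pF: "p \<in> F"
        show "0 \<le> x' p \<and> x' p \<le> 1"
        proof (cases "p \<in> Z")
          case False
          then have "a' p = 0" by (auto simp: a'_def Z_def)
          then show ?thesis using x pF by (simp add: x'_def)
        next
          case True
          then have pr: "0 < x p" "x p < 1" "a p \<noteq> 0" "a' p = a p" by (auto simp: Z_def Fr_def a'_def)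
          have sp: "s \<le> bnd p" using sle True by blast
          show ?thesis
          proof (cases "a p > 0")
            case True
            have "s * a p \<le> bnd p * a p" using sp True by (intro mult_right_mono) auto
            also have "bnd p * a p = 1 - x p" using True by (simp add: bnd_def)
            finally show ?thesis using pr s0 True by (simp add: x'_def)
          next
            case False
            then have an: "a p < 0" using pr by auto
            have "s * a p \<ge> bnd p * a p" using sp an by (intro mult_right_mono_neg) auto
            moreover have "bnd p * a p = - x p" using an by (simp add: bnd_def)
            moreover have "s * a p \<le> 0" using s0 an by (simp add: mult_pos_neg less_imp_le)
            ultimately show ?thesis using pr by (simp add: x'_def)
          qed
        qed
      qed
      have sums: "\<forall>i\<in>J. (\<Sum>p\<in>F. x' p * v p i) = (\<Sum>p\<in>F. x p * v p i)"
      proof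
        fix i assume i: "i \<in> J"
        have "(\<Sum>p\<in>F. a' p * v p i) = (\<Sum>p\<in>F. if p \<in> Fr then a p * v p i else 0)"
          by (rule sum.cong) (auto simp: a'_def)
        also have "\<dots> = (\<Sum>p\<in>F \<inter> Fr. a p * v p i)" using F by (simp add: sum.inter_restrict)
        also have "F \<inter> Fr = Fr" by (auto simp: Fr_def)
        finally have "(\<Sum>p\<in>F. a' p * v p i) = 0" using a(2) i by simp
        moreover have "(\<Sum>p\<in>F. x' p * v p i) = (\<Sum>p\<in>F. x p * v p i) + s * (\<Sum>p\<in>F. a' p * v p i)"
          by (simp add: x'_def algebra_simps sum.distrib sum_distrib_left)
        ultimately show "(\<Sum>p\<in>F. x' p * v p i) = (\<Sum>p\<in>F. x p * v p i)" by simp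
      qed
      have sub: "{p\<in>F. 0 < x' p \<and> x' p < 1} \<subseteq> Fr - {ps}"
      proof
        fix p assume p: "p \<in> {p\<in>F. 0 < x' p \<and> x' p < 1}"
        show "p \<in> Fr - {ps}"
        proof (cases "p \<in> Fr")
          case False
          then have "x' p = x p" by (simp add: x'_def a'_def)
          then show ?thesis using p False by (auto simp: Fr_def)
        next
          case True
          have "p \<noteq> ps"
          proof
            assume e: "p = ps"
            have az: "a ps \<noteq> 0" "a' ps = a ps" using ps(1) by (auto simp: Z_def a'_def)
            have "x' ps = 0 \<or> x' ps = 1"
              using az ps(2)[symmetric] by (auto simp: x'_def bnd_def field_simps split: if_splits)
            then show False using p e by auto
          qed
          then show ?thesis using True by auto
        qed
      qed
      have "ps \<in> Fr" using ps(1) by (simp add: Z_def)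
      then have "card (Fr - {ps}) < card Fr" using fFr by (rule card_Diff1_less[rotated])
      then have lt: "card {p\<in>F. 0 < x' p \<and> x' p < 1} < n"
        using card_mono[OF _ sub] fFr n Fr_def by fastforce
      obtain y where y: "(\<forall>p\<in>F. 0 \<le> y p \<and> y p \<le> 1)"
         "(\<forall>i\<in>J. (\<Sum>p\<in>F. y p * v p i) = (\<Sum>p\<in>F. x' p * v p i))"
         "card {p\<in>F. 0 < y p \<and> y p < 1} \<le> card J"
        using less.IH[OF lt] bounds by blast
      show ?thesis using y sums by (intro exI[of _ y]) auto
    qed
  qed
qed

lemma vertex:
  fixes v :: "'b \<Rightarrow> nat \<Rightarrow> real" and x :: "'b \<Rightarrow> real"
  assumes J: "finite J" and F: "finite F" and x: "\<forall>p\<in>F. 0 \<le> x p \<and> x p \<le> 1"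
  shows "\<exists>y. (\<forall>p\<in>F. 0 \<le> y p \<and> y p \<le> 1) \<and> (\<forall>i\<in>J. (\<Sum>p\<in>F. y p * v p i) = (\<Sum>p\<in>F. x p * v p i))
       \<and> card {p\<in>F. 0 < y p \<and> y p < 1} \<le> card J"
  using vertex_aux[OF J F, of _ v] x by blast

locale fam =
  fixes M :: "'a measure" and X :: "'a set" and P :: "nat set" and \<psi> :: "nat \<Rightarrow> 'a set \<Rightarrow> real"
  assumes X: "X \<in> sets M" and finP: "finite P"
  and mem: "\<And>i. i \<in> P \<Longrightarrow> nnc M X (\<psi> i)"
begin

definition nu where "nu A = (\<Sum>i\<in>P. \<psi> i A)"

lemma chg: "i \<in> P \<Longrightarrow> is_charge M (\<psi> i)" using mem nnc.c by blast
lemma nn: "i \<in> P \<Longrightarrow> A \<in> sets M \<Longrightarrow> A \<subseteq> X \<Longrightarrow> \<psi> i A \<ge> 0" using mem nnc.nn by blast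

lemma psi_le_nu: "i \<in> P \<Longrightarrow> A \<in> sets M \<Longrightarrow> A \<subseteq> X \<Longrightarrow> \<psi> i A \<le> nu A"
  unfolding nu_def using finP nn by (intro member_le_sum) auto

lemma nu_charge: "is_charge M nu"
  unfolding nu_def[abs_def] using finP chg by (intro charge_sum) auto

lemma nu_nnc: "nnc M X nu"
proof
  show "X \<in> sets M" by (rule X)
  show "is_charge M nu" by (rule nu_charge)
  show "\<And>A. A \<in> sets M \<Longrightarrow> A \<subseteq> X \<Longrightarrow> 0 \<le> nu A" unfolding nu_def using nn by (intro sum_nonneg) auto
  fix A assume A: "A \<in> sets M" "A \<subseteq> X" "0 < nu A"
  obtain i where i: "i \<in> P" "\<psi> i A > 0"
  proof (rule ccontr)
    assume "\<not> thesis"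
    then have "\<forall>i\<in>P. \<psi> i A \<le> 0" using that by force
    then have "nu A \<le> 0" unfolding nu_def by (intro sum_nonpos) auto
    then show False using A by simp
  qed
  obtain B where B: "B \<in> sets M" "B \<subseteq> A" "\<psi> i B \<noteq> 0" "\<psi> i B \<noteq> \<psi> i A"
    using nnc.na[OF mem[OF i(1)] A(1,2) i(2)] by blast
  have BX: "B \<subseteq> X" using B A by auto
  have "\<psi> i B \<ge> 0" using nn[OF i(1) B(1) BX] .
  then have b0: "\<psi> i B > 0" using B by auto
  have "\<psi> i B \<le> \<psi> i A" using nnc.mono[OF mem[OF i(1)] A(1) B(1) B(2) A(2)] .
  then have "\<psi> i (A - B) > 0" using charge_diff[OF chg[OF i(1)] A(1) B(1) B(2)] B by auto
  moreover have "\<psi> i (A - B) \<le> nu (A - B)" using psi_le_nu[OF i(1), of "A - B"] A B by auto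
  moreover have "nu (A - B) = nu A - nu B" using charge_diff[OF nu_charge A(1) B(1) B(2)] .
  moreover have "\<psi> i B \<le> nu B" using psi_le_nu[OF i(1) B(1) BX] .
  ultimately have "nu B \<noteq> 0" "nu B \<noteq> nu A" using b0 by linarith+
  then show "\<exists>B\<in>sets M. B \<subseteq> A \<and> nu B \<noteq> 0 \<and> nu B \<noteq> nu A" using B by blast
qed

definition good :: "real \<Rightarrow> 'a set \<Rightarrow> 'a set \<Rightarrow> 'a set set \<Rightarrow> ('a set \<Rightarrow> real) \<Rightarrow> bool" where
  "good t E S Q w \<longleftrightarrow> S \<in> sets M \<and> S \<subseteq> E \<and> finite Q \<and> Q \<subseteq> sets M \<and> (\<forall>q\<in>Q. q \<subseteq> E \<and> q \<inter> S = {})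
     \<and> disjoint Q \<and> (\<forall>q\<in>Q. 0 \<le> w q \<and> w q \<le> 1) \<and> (\<forall>i\<in>P. \<psi> i S + (\<Sum>q\<in>Q. w q * \<psi> i q) = t * \<psi> i E)"

lemma step:
  assumes g: "good t E S Q w" and d: "d > 0" and EX: "E \<subseteq> X"
  shows "\<exists>S' Q' w'. good t E S' Q' w' \<and> S \<subseteq> S' \<and> (\<forall>q\<in>Q'. nu q \<le> d) \<and> card Q' \<le> card P"
proof -
  note gd = g[unfolded good_def]
  have Sm: "S \<in> sets M" and SE: "S \<subseteq> E" and fQ: "finite Q" and Qm: "Q \<subseteq> sets M"
    and QE: "\<And>q. q \<in> Q \<Longrightarrow> q \<subseteq> E" and QS: "\<And>q. q \<in> Q \<Longrightarrow> q \<inter> S = {}"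
    and dQ: "disjoint Q" and wb: "\<And>q. q \<in> Q \<Longrightarrow> 0 \<le> w q \<and> w q \<le> 1"
    and eq: "\<And>i. i \<in> P \<Longrightarrow> \<psi> i S + (\<Sum>q\<in>Q. w q * \<psi> i q) = t * \<psi> i E"
    using gd by auto
  have "\<forall>q\<in>Q. \<exists>R. finite R \<and> R \<subseteq> sets M \<and> disjoint R \<and> \<Union>R = q \<and> {} \<notin> R \<and> (\<forall>r\<in>R. nu r \<le> d)"
  proof
    fix q assume q: "q \<in> Q"
    then have "q \<in> sets M" "q \<subseteq> X" using Qm QE EX by auto
    then show "\<exists>R. finite R \<and> R \<subseteq> sets M \<and> disjoint R \<and> \<Union>R = q \<and> {} \<notin> R \<and> (\<forall>r\<in>R. nu r \<le> d)"
      using nnc.partition[OF nu_nnc _ _ d] by blast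
  qed
  then obtain part where part: "\<And>q. q \<in> Q \<Longrightarrow> finite (part q) \<and> part q \<subseteq> sets M \<and> disjoint (part q)
      \<and> \<Union>(part q) = q \<and> {} \<notin> part q \<and> (\<forall>r\<in>part q. nu r \<le> d)"
    by metis
  have pf: "\<And>q. q \<in> Q \<Longrightarrow> finite (part q)" and pm: "\<And>q. q \<in> Q \<Longrightarrow> part q \<subseteq> sets M"
    and pd: "\<And>q. q \<in> Q \<Longrightarrow> disjoint (part q)" and pU: "\<And>q. q \<in> Q \<Longrightarrow> \<Union>(part q) = q"
    and pne: "\<And>q. q \<in> Q \<Longrightarrow> {} \<notin> part q" and pnu: "\<And>q r. q \<in> Q \<Longrightarrow> r \<in> part q \<Longrightarrow> nu r \<le> d"
    using part by blast+
  have psub: "\<And>q r. q \<in> Q \<Longrightarrow> r \<in> part q \<Longrightarrow> r \<subseteq> q" using pU by blast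
  define Pa where "Pa = \<Union>(part ` Q)"
  have fPa: "finite Pa" using fQ pf by (auto simp: Pa_def)
  have Pam: "Pa \<subseteq> sets M" using pm by (auto simp: Pa_def)
  have uniq: "q1 = q2" if "q1 \<in> Q" "q2 \<in> Q" "r \<in> part q1" "r \<in> part q2" for q1 q2 r
  proof (rule ccontr)
    assume ne: "q1 \<noteq> q2"
    have "r \<subseteq> q1" "r \<subseteq> q2" using psub that by auto
    moreover have "q1 \<inter> q2 = {}" using dQ ne that unfolding disjoint_def by blast
    moreover have "r \<noteq> {}" using pne that by auto
    ultimately show False by blast
  qed
  have dPa: "disjoint Pa"
    unfolding disjoint_def
  proof (intro ballI impI)
    fix r1 r2 assume r: "r1 \<in> Pa" "r2 \<in> Pa" "r1 \<noteq> r2"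
    then obtain q1 q2 where q: "q1 \<in> Q" "q2 \<in> Q" "r1 \<in> part q1" "r2 \<in> part q2" by (auto simp: Pa_def)
    show "r1 \<inter> r2 = {}"
    proof (cases "q1 = q2")
      case True then show ?thesis using pd[OF q(1)] q r unfolding disjoint_def by blast
    next
      case False
      have "r1 \<subseteq> q1" "r2 \<subseteq> q2" using psub q by auto
      moreover have "q1 \<inter> q2 = {}" using dQ False q unfolding disjoint_def by blast
      ultimately show ?thesis by blast
    qed
  qed
  have PaE: "r \<subseteq> E" "r \<inter> S = {}" if rP: "r \<in> Pa" for r
  proof -
    obtain q where "q \<in> Q" "r \<in> part q" using rP by (auto simp: Pa_def)
    then have "r \<subseteq> q" using psub by auto
    moreover have "q \<subseteq> E" "q \<inter> S = {}" using QE QS \<open>q \<in> Q\<close> by auto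
    ultimately show "r \<subseteq> E" "r \<inter> S = {}" by blast+
  qed
  define x where "x r = (\<Sum>q\<in>Q. if r \<in> part q then w q else 0)" for r
  have xr: "x r = w q" if "q \<in> Q" "r \<in> part q" for q r
  proof -
    have "x r = (if r \<in> part q then w q else 0) + (\<Sum>q'\<in>Q - {q}. if r \<in> part q' then w q' else 0)"
      unfolding x_def using fQ that(1) by (simp add: sum.remove)
    also have "(\<Sum>q'\<in>Q - {q}. if r \<in> part q' then w q' else 0) = 0"
      using uniq[OF that(1) _ that(2)] by (intro sum.neutral) auto
    finally show ?thesis using that by simp
  qed
  have xb: "\<forall>r\<in>Pa. 0 \<le> x r \<and> x r \<le> 1"
  proof
    fix r assume "r \<in> Pa"
    then obtain q where "q \<in> Q" "r \<in> part q" by (auto simp: Pa_def)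
    then show "0 \<le> x r \<and> x r \<le> 1" using xr wb by auto
  qed
  have xsum: "(\<Sum>r\<in>Pa. x r * \<psi> i r) = (\<Sum>q\<in>Q. w q * \<psi> i q)" if i: "i \<in> P" for i
  proof -
    have "(\<Sum>r\<in>Pa. x r * \<psi> i r) = (\<Sum>q\<in>Q. \<Sum>r\<in>part q. x r * \<psi> i r)"
      unfolding Pa_def
    proof (rule sum.UNION_disjoint[OF fQ])
      show "\<forall>q\<in>Q. finite (part q)" using pf by auto
      show "\<forall>q1\<in>Q. \<forall>q2\<in>Q. q1 \<noteq> q2 \<longrightarrow> part q1 \<inter> part q2 = {}" using uniq by blast
    qed
    also have "\<dots> = (\<Sum>q\<in>Q. w q * \<psi> i q)"
    proof (rule sum.cong[OF refl])
      fix q assume q: "q \<in> Q"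
      have "(\<Sum>r\<in>part q. x r * \<psi> i r) = (\<Sum>r\<in>part q. w q * \<psi> i r)"
        using xr[OF q] by (intro sum.cong) auto
      also have "\<dots> = w q * (\<Sum>r\<in>part q. \<psi> i r)" by (simp add: sum_distrib_left)
      also have "(\<Sum>r\<in>part q. \<psi> i r) = \<psi> i (\<Union>(part q))"
        using pf[OF q] pm[OF q] pd[OF q] by (intro charge_finite_Union[OF chg[OF i], symmetric]) auto
      finally show "(\<Sum>r\<in>part q. x r * \<psi> i r) = w q * \<psi> i q" using pU[OF q] by simp
    qed
    finally show ?thesis .
  qed
  obtain y where y: "\<forall>r\<in>Pa. 0 \<le> y r \<and> y r \<le> 1"
    "\<forall>i\<in>P. (\<Sum>r\<in>Pa. y r * \<psi> i r) = (\<Sum>r\<in>Pa. x r * \<psi> i r)"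
    "card {r\<in>Pa. 0 < y r \<and> y r < 1} \<le> card P"
    using vertex[OF finP fPa xb, of "\<lambda>r i. \<psi> i r"] by blast
  define U where "U = {r\<in>Pa. y r = 1}"
  define Q' where "Q' = {r\<in>Pa. 0 < y r \<and> y r < 1}"
  define S' where "S' = S \<union> \<Union>U"
  have fU: "finite U" using fPa by (simp add: U_def)
  have UPa: "U \<subseteq> Pa" by (auto simp: U_def)
  have UM: "U \<subseteq> sets M" using Pam UPa by blast
  have dU: "disjoint U" using dPa UPa unfolding disjoint_def by blast
  have Um: "\<Union>U \<in> sets M" using fU Pam by (intro sets.finite_Union) (auto simp: U_def)
  have S'm: "S' \<in> sets M" using Sm Um by (simp add: S'_def)
  have S'E: "S' \<subseteq> E" using SE PaE by (auto simp: S'_def U_def)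
  have SU: "S \<inter> \<Union>U = {}" using PaE by (auto simp: U_def)
  have Q'S': "q \<inter> S' = {}" if "q \<in> Q'" for q
  proof -
    have "q \<inter> S = {}" using PaE that by (auto simp: Q'_def)
    moreover have "q \<inter> u = {}" if "u \<in> U" for u
    proof -
      have "u \<noteq> q" using \<open>q \<in> Q'\<close> that by (auto simp: Q'_def U_def)
      then show ?thesis using dPa \<open>q \<in> Q'\<close> that unfolding disjoint_def Q'_def U_def by blast
    qed
    ultimately show ?thesis by (auto simp: S'_def)
  qed
  have dQ': "disjoint Q'" using dPa unfolding disjoint_def Q'_def by blast
  have eq': "\<psi> i S' + (\<Sum>q\<in>Q'. y q * \<psi> i q) = t * \<psi> i E" if i: "i \<in> P" for i
  proof -
    have "\<psi> i S' = \<psi> i S + \<psi> i (\<Union>U)" unfolding S'_def using Sm Um SU by (rule charge_Un[OF chg[OF i]])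
    also have "\<psi> i (\<Union>U) = (\<Sum>u\<in>U. \<psi> i u)"
      by (rule charge_finite_Union[OF chg[OF i] fU UM dU])
    finally have a: "\<psi> i S' = \<psi> i S + (\<Sum>u\<in>U. \<psi> i u)" .
    have "(\<Sum>r\<in>Pa. y r * \<psi> i r) = (\<Sum>r\<in>Pa - U. y r * \<psi> i r) + (\<Sum>r\<in>U. y r * \<psi> i r)"
      by (rule sum.subset_diff[OF UPa fPa])
    moreover have "(\<Sum>r\<in>U. y r * \<psi> i r) = (\<Sum>u\<in>U. \<psi> i u)" by (simp add: U_def)
    moreover have "(\<Sum>r\<in>Pa - U. y r * \<psi> i r) = (\<Sum>r\<in>Q'. y r * \<psi> i r)"
    proof (rule sum.mono_neutral_right)
      show "finite (Pa - U)" using fPa by simp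
      show "Q' \<subseteq> Pa - U" by (auto simp: Q'_def U_def)
      show "\<forall>r\<in>Pa - U - Q'. y r * \<psi> i r = 0"
      proof
        fix r assume "r \<in> Pa - U - Q'"
        then have "y r = 0" using y(1) by (auto simp: U_def Q'_def)
        then show "y r * \<psi> i r = 0" by simp
      qed
    qed
    ultimately have "(\<Sum>r\<in>Pa. y r * \<psi> i r) = (\<Sum>u\<in>U. \<psi> i u) + (\<Sum>r\<in>Q'. y r * \<psi> i r)" by simp
    then show ?thesis using a y(2) i xsum[OF i] eq[OF i] by simp
  qed
  have "good t E S' Q' y"
    unfolding good_def
    using S'm S'E fPa Pam PaE Q'S' dQ' y(1) eq'
    by (auto simp: Q'_def)
  moreover have "S \<subseteq> S'" by (simp add: S'_def)
  moreover have "\<forall>q\<in>Q'. nu q \<le> d" using pnu by (auto simp: Q'_def Pa_def)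
  moreover have "card Q' \<le> card P" using y(3) by (simp add: Q'_def)
  ultimately show ?thesis by blast
qed

lemma split:
  assumes E: "E \<in> sets M" "E \<subseteq> X" and t: "0 \<le> t" "t \<le> 1"
  shows "\<exists>S\<in>sets M. S \<subseteq> E \<and> (\<forall>i\<in>P. \<psi> i S = t * \<psi> i E)"
proof -
  define G where "G n T \<longleftrightarrow> good t E (fst T) (fst (snd T)) (snd (snd T))
      \<and> (\<forall>q\<in>fst (snd T). nu q \<le> 1 / real (Suc n)) \<and> card (fst (snd T)) \<le> card P" for n T
  have g0: "good t E {} {E} (\<lambda>_. t)"
    unfolding good_def using E t by (auto simp: charge_empty[OF chg] disjoint_def)
  have h0: "\<exists>T. G 0 T"
  proof -
    obtain S' Q' w' where "good t E S' Q' w'" "\<forall>q\<in>Q'. nu q \<le> 1" "card Q' \<le> card P"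
      using step[OF g0 _ E(2), of 1] by auto
    then have "G 0 (S', Q', w')" by (simp add: G_def)
    then show ?thesis by blast
  qed
  have h1: "\<exists>T'. G (Suc n) T' \<and> fst T \<subseteq> fst T'" if "G n T" for n T
  proof -
    have gT: "good t E (fst T) (fst (snd T)) (snd (snd T))" using that by (simp add: G_def)
    obtain S' Q' w' where "good t E S' Q' w'" "fst T \<subseteq> S'" "\<forall>q\<in>Q'. nu q \<le> 1 / real (Suc (Suc n))" "card Q' \<le> card P"
      using step[OF gT _ E(2), of "1 / real (Suc (Suc n))"] by auto
    then have "G (Suc n) (S', Q', w') \<and> fst T \<subseteq> fst (S', Q', w')" by (simp add: G_def)
    then show ?thesis by blast
  qed
  obtain T where T: "\<And>n. G n (T n) \<and> fst (T n) \<subseteq> fst (T (Suc n))"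
    using dependent_nat_choice[of G "\<lambda>n T T'. fst T \<subseteq> fst T'", OF h0 h1] by metis
  define Sn where "Sn n = fst (T n)" for n
  define Qn where "Qn n = fst (snd (T n))" for n
  define wn where "wn n = snd (snd (T n))" for n
  have gn: "good t E (Sn n) (Qn n) (wn n)" and small: "\<forall>q\<in>Qn n. nu q \<le> 1 / real (Suc n)"
    and cardn: "card (Qn n) \<le> card P" for n
    using T[of n] by (simp_all add: G_def Sn_def Qn_def wn_def)
  have inc: "incseq Sn" using T by (intro incseq_SucI) (simp add: Sn_def)
  have rS: "range Sn \<subseteq> sets M" using gn by (auto simp: good_def)
  define L where "L = (\<Union>n. Sn n)"
  have Lm: "L \<in> sets M" using rS by (auto simp: L_def)
  have SnE: "Sn n \<subseteq> E" for n using gn[of n] unfolding good_def by blast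
  have LE: "L \<subseteq> E" using SnE by (auto simp: L_def)
  have "\<psi> i L = t * \<psi> i E" if i: "i \<in> P" for i
  proof -
    have l1: "(\<lambda>n. \<psi> i (Sn n)) \<longlonglongrightarrow> \<psi> i L" unfolding L_def by (rule charge_incseq[OF chg[OF i] inc rS])
    have bnd: "norm (\<psi> i (Sn n) - t * \<psi> i E) \<le> real (card P) * inverse (real (Suc n))" for n
    proof -
      have gd: "finite (Qn n)" "Qn n \<subseteq> sets M" "\<forall>q\<in>Qn n. q \<subseteq> E" "\<forall>q\<in>Qn n. 0 \<le> wn n q \<and> wn n q \<le> 1"
        "\<psi> i (Sn n) + (\<Sum>q\<in>Qn n. wn n q * \<psi> i q) = t * \<psi> i E"
        using gn[of n] i unfolding good_def by auto
      have "norm (\<psi> i (Sn n) - t * \<psi> i E) = \<bar>\<Sum>q\<in>Qn n. wn n q * \<psi> i q\<bar>" using gd(5) by auto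
      also have "\<dots> \<le> (\<Sum>q\<in>Qn n. \<bar>wn n q * \<psi> i q\<bar>)" by (rule sum_abs)
      also have "\<dots> \<le> (\<Sum>q\<in>Qn n. inverse (real (Suc n)))"
      proof (rule sum_mono)
        fix q assume q: "q \<in> Qn n"
        have qX: "q \<in> sets M" "q \<subseteq> X" using gd(2) gd(3) q E(2) by blast+
        have p0: "0 \<le> \<psi> i q" using nn[OF i qX] .
        have "\<bar>wn n q * \<psi> i q\<bar> = wn n q * \<psi> i q" using p0 gd(4) q by simp
        also have "\<dots> \<le> \<psi> i q" using p0 gd(4) q by (simp add: mult_left_le_one_le)
        also have "\<dots> \<le> nu q" using psi_le_nu[OF i qX] .
        also have "\<dots> \<le> inverse (real (Suc n))" using small[of n] q by (simp add: divide_inverse)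
        finally show "\<bar>wn n q * \<psi> i q\<bar> \<le> inverse (real (Suc n))" .
      qed
      also have "\<dots> = real (card (Qn n)) * inverse (real (Suc n))" by simp
      also have "\<dots> \<le> real (card P) * inverse (real (Suc n))"
        using cardn[of n] by (intro mult_right_mono) auto
      finally show ?thesis .
    qed
    have "(\<lambda>n. \<psi> i (Sn n) - t * \<psi> i E) \<longlonglongrightarrow> 0"
    proof (rule Lim_null_comparison)
      show "\<forall>\<^sub>F n in sequentially. norm (\<psi> i (Sn n) - t * \<psi> i E) \<le> real (card P) * inverse (real (Suc n))"
        using bnd by simp
      show "(\<lambda>n. real (card P) * inverse (real (Suc n))) \<longlonglongrightarrow> 0"
        by (intro tendsto_mult_right_zero LIMSEQ_inverse_real_of_nat)
    qed
    then have "(\<lambda>n. (\<psi> i (Sn n) - t * \<psi> i E) + t * \<psi> i E) \<longlonglongrightarrow> 0 + t * \<psi> i E"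
      by (intro tendsto_add tendsto_const)
    then have l2: "(\<lambda>n. \<psi> i (Sn n)) \<longlonglongrightarrow> t * \<psi> i E" by simp
    show ?thesis using LIMSEQ_unique[OF l1 l2] .
  qed
  then show ?thesis using Lm LE by blast
qed

lemma exact:
  assumes K: "finite K" "K \<noteq> {}"
  shows "E \<in> sets M \<Longrightarrow> E \<subseteq> X \<Longrightarrow> \<exists>F. (\<forall>j\<in>K. F j \<in> sets M \<and> F j \<subseteq> E) \<and> (\<forall>j\<in>K. \<forall>l\<in>K. j \<noteq> l \<longrightarrow> F j \<inter> F l = {})
     \<and> (\<Union>j\<in>K. F j) = E \<and> (\<forall>i\<in>P. \<forall>j\<in>K. \<psi> i (F j) = \<psi> i E / real (card K))"
  using K
proof (induction K arbitrary: E rule: finite_ne_induct)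
  case (singleton a)
  then show ?case by (intro exI[of _ "\<lambda>_. E"]) auto
next
  case (insert a K)
  define k where "k = card K"
  have k0: "k > 0" using insert.hyps by (simp add: k_def card_gt_0_iff)
  have ck: "card (insert a K) = Suc k" using insert.hyps by (simp add: k_def)
  have t1: "0 \<le> 1 / real (Suc k)" "1 / real (Suc k) \<le> 1" by auto
  from split[OF insert.prems(1,2) t1]
  obtain S where S: "S \<in> sets M" "S \<subseteq> E" "\<forall>i\<in>P. \<psi> i S = (1 / real (Suc k)) * \<psi> i E"
    by blast
  have ES: "E - S \<in> sets M" "E - S \<subseteq> X" using S insert.prems by auto
  from insert.IH[OF ES]
  obtain F where Fall: "(\<forall>j\<in>K. F j \<in> sets M \<and> F j \<subseteq> E - S) \<and> (\<forall>j\<in>K. \<forall>l\<in>K. j \<noteq> l \<longrightarrow> F j \<inter> F l = {})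
     \<and> (\<Union>j\<in>K. F j) = E - S \<and> (\<forall>i\<in>P. \<forall>j\<in>K. \<psi> i (F j) = \<psi> i (E - S) / real (card K))" ..
  note F = Fall[THEN conjunct1] Fall[THEN conjunct2, THEN conjunct1] Fall[THEN conjunct2, THEN conjunct2, THEN conjunct1]
    Fall[THEN conjunct2, THEN conjunct2, THEN conjunct2]
  define F' where "F' = F(a := S)"
  have F'K: "F' j = F j" if "j \<in> K" for j using that insert.hyps by (auto simp: F'_def)
  have Fa: "F' a = S" by (simp add: F'_def)
  have sub: "F' m \<subseteq> E - S" "F' m \<in> sets M" if "m \<in> K" for m using F(1) F'K[OF that] that by auto
  have "\<forall>j\<in>insert a K. F' j \<in> sets M \<and> F' j \<subseteq> E"
  proof
    fix j assume "j \<in> insert a K"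
    then show "F' j \<in> sets M \<and> F' j \<subseteq> E"
    proof
      assume "j = a" then show ?thesis using Fa S by simp
    next
      assume "j \<in> K" then show ?thesis using sub[of j] by blast
    qed
  qed
  moreover have "\<forall>j\<in>insert a K. \<forall>l\<in>insert a K. j \<noteq> l \<longrightarrow> F' j \<inter> F' l = {}"
  proof (intro ballI impI)
    fix j l assume j: "j \<in> insert a K" and l: "l \<in> insert a K" and jl: "j \<noteq> l"
    show "F' j \<inter> F' l = {}"
    proof (cases "j = a")
      case True
      then have "l \<in> K" using l jl by auto
      then show ?thesis using sub(1)[of l] True Fa by blast
    next
      case False
      then have jK: "j \<in> K" using j by auto
      show ?thesis
      proof (cases "l = a")
        case True then show ?thesis using sub(1)[OF jK] Fa by blast
      next
        case False
        then have "l \<in> K" using l by auto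
        then show ?thesis using F(2) jK jl F'K[OF jK] F'K[of l] by auto
      qed
    qed
  qed
  moreover have "(\<Union>j\<in>insert a K. F' j) = E"
  proof -
    have "(\<Union>j\<in>K. F' j) = E - S" using F(3) F'K by auto
    moreover have "(\<Union>j\<in>insert a K. F' j) = F' a \<union> (\<Union>j\<in>K. F' j)" by simp
    ultimately show ?thesis using S(2) Fa by auto
  qed
  moreover have "\<forall>i\<in>P. \<forall>j\<in>insert a K. \<psi> i (F' j) = \<psi> i E / real (card (insert a K))"
  proof (intro ballI)
    fix i j assume i: "i \<in> P" and j: "j \<in> insert a K"
    have d: "\<psi> i (E - S) = \<psi> i E - \<psi> i E / real (Suc k)"
      using charge_diff[OF chg[OF i] insert.prems(1) S(1,2)] S(3) i by simp
    show "\<psi> i (F' j) = \<psi> i E / real (card (insert a K))"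
    proof (cases "j = a")
      case True then show ?thesis using S(3) i ck by (simp add: F'_def)
    next
      case False
      then have jK: "j \<in> K" using j by auto
      have "\<psi> i (F' j) = (\<psi> i E - \<psi> i E / real (Suc k)) / real k"
        using F(4) i jK F'K d by (simp add: k_def)
      also have "\<dots> = \<psi> i E / real (Suc k)"
      proof -
        have kk: "real k > 0" using k0 by simp
        have "\<psi> i E - \<psi> i E / real (Suc k) = \<psi> i E * real k / real (Suc k)"
          by (simp add: field_simps)
        then show ?thesis using kk by simp
      qed
      finally show ?thesis using ck by simp
    qed
  qed
  ultimately show ?case by blast
qed

end

lemma pos_part_eq:
  assumes c: "is_charge M f" and nn: "\<forall>A\<in>sets M. A \<subseteq> X \<longrightarrow> f A \<ge> 0"
    and B: "B \<in> sets M" "B \<subseteq> X"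
  shows "pos_part M f B = f B"
  unfolding pos_part_def
proof (rule cSup_eq_maximum)
  show "f B \<in> {f C |C. C \<in> sets M \<and> C \<subseteq> B}" using B by blast
  fix x assume "x \<in> {f C |C. C \<in> sets M \<and> C \<subseteq> B}"
  then obtain C where C: "C \<in> sets M" "C \<subseteq> B" "x = f C" by blast
  have "f (B - C) = f B - f C" by (rule charge_diff[OF c B(1) C(1) C(2)])
  moreover have "B - C \<in> sets M" using B(1) C(1) by (rule sets.Diff)
  then have "f (B - C) \<ge> 0" using nn B by auto
  ultimately show "x \<le> f B" using C by simp
qed

theorem lemma7:
  fixes M :: "'a measure" and r :: nat and \<psi> :: "nat \<Rightarrow> 'a set \<Rightarrow> real" and X :: "'a set"
  assumes "r \<ge> 1"
    and "\<And>i. i < r \<Longrightarrow> nonatomic_charge M (\<psi> i)"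
    and "X \<in> sets M"
    and "\<And>i. i < r \<Longrightarrow> (\<forall>A \<in> sets M. A \<subseteq> X \<longrightarrow> \<psi> i A \<ge> 0) \<or>
                         (\<forall>A \<in> sets M. A \<subseteq> X \<longrightarrow> \<psi> i A \<le> 0)"
    and "{i. i < r \<and> (\<forall>A \<in> sets M. A \<subseteq> X \<longrightarrow> \<psi> i A \<ge> 0)} \<noteq> {}"
  shows "\<exists>F :: nat \<Rightarrow> 'a set.
           (\<forall>i < r. F i \<in> sets M) \<and>
           (\<forall>i < r. \<forall>j < r. i \<noteq> j \<longrightarrow> F i \<inter> F j = {}) \<and>
           (\<Union>i<r. F i) = X \<and>
           (\<forall>i < r. \<forall>j < r. \<psi> i (F i) \<ge> \<psi> i (F j))"
proof -
  note nac = assms(2) and Xm = assms(3) and sgn = assms(4)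
  define P where "P = {i. i < r \<and> (\<forall>A \<in> sets M. A \<subseteq> X \<longrightarrow> \<psi> i A \<ge> 0)}"
  have Pne: "P \<noteq> {}" using assms(5) by (simp add: P_def)
  have Pr: "P \<subseteq> {..<r}" by (auto simp: P_def)
  have finP: "finite P" using Pr finite_subset by blast
  have chgr: "is_charge M (\<psi> i)" if "i < r" for i using nac[OF that] by (simp add: nonatomic_charge_def)
  have mem: "nnc M X (\<psi> i)" if i: "i \<in> P" for i
  proof
    have ir: "i < r" and nn: "\<forall>A\<in>sets M. A \<subseteq> X \<longrightarrow> \<psi> i A \<ge> 0" using i by (auto simp: P_def)
    show "X \<in> sets M" by (rule Xm)
    show c: "is_charge M (\<psi> i)" by (rule chgr[OF ir])
    show "\<And>A. A \<in> sets M \<Longrightarrow> A \<subseteq> X \<Longrightarrow> 0 \<le> \<psi> i A" using nn by blast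
    fix A assume A: "A \<in> sets M" "A \<subseteq> X" "0 < \<psi> i A"
    have na: "nonatomic_measure M (pos_part M (\<psi> i))" using nac[OF ir] by (simp add: nonatomic_charge_def)
    then have "\<not> is_atom M (pos_part M (\<psi> i)) A" by (simp add: nonatomic_measure_def)
    moreover have ppA: "pos_part M (\<psi> i) A = \<psi> i A" using pos_part_eq[OF c nn A(1,2)] .
    ultimately obtain B where B: "B \<in> sets M" "B \<subseteq> A" "pos_part M (\<psi> i) B \<noteq> 0" "pos_part M (\<psi> i) B \<noteq> \<psi> i A"
      using A unfolding is_atom_def by auto
    have "pos_part M (\<psi> i) B = \<psi> i B" using pos_part_eq[OF c nn B(1)] B A by auto
    then show "\<exists>B\<in>sets M. B \<subseteq> A \<and> \<psi> i B \<noteq> 0 \<and> \<psi> i B \<noteq> \<psi> i A" using B by auto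
  qed
  interpret fam M X P \<psi> unfolding fam_def using Xm finP mem by blast
  obtain F where F: "\<forall>j\<in>P. F j \<in> sets M \<and> F j \<subseteq> X" "\<forall>j\<in>P. \<forall>l\<in>P. j \<noteq> l \<longrightarrow> F j \<inter> F l = {}"
     "(\<Union>j\<in>P. F j) = X" "\<forall>i\<in>P. \<forall>j\<in>P. \<psi> i (F j) = \<psi> i X / real (card P)"
    using exact[OF finP Pne Xm subset_refl] by blast
  define G where "G i = (if i \<in> P then F i else {})" for i
  have "\<forall>i < r. G i \<in> sets M" using F(1) by (auto simp: G_def)
  moreover have "\<forall>i < r. \<forall>j < r. i \<noteq> j \<longrightarrow> G i \<inter> G j = {}" using F(2) by (auto simp: G_def)
  moreover have "(\<Union>i<r. G i) = X"
  proof -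
    have "(\<Union>i<r. G i) = (\<Union>i\<in>P. F i)" using Pr by (auto simp: G_def split: if_splits)
    then show ?thesis using F(3) by simp
  qed
  moreover have "\<forall>i < r. \<forall>j < r. \<psi> i (G i) \<ge> \<psi> i (G j)"
  proof (intro allI impI)
    fix i j assume ir: "i < r" and jr: "j < r"
    have e0: "\<psi> i {} = 0" using chgr[OF ir] by (simp add: charge_empty)
    have Gj: "G j \<in> sets M" "G j \<subseteq> X" using F(1) by (auto simp: G_def)
    show "\<psi> i (G i) \<ge> \<psi> i (G j)"
    proof (cases "i \<in> P")
      case True
      have Gi: "\<psi> i (G i) = \<psi> i X / real (card P)" using F(4) True by (simp add: G_def)
      show ?thesis
      proof (cases "j \<in> P")
        case True then show ?thesis using Gi F(4) \<open>i \<in> P\<close> by (simp add: G_def)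
      next
        case False
        have "\<psi> i X \<ge> 0" using \<open>i \<in> P\<close> Xm by (auto simp: P_def)
        then show ?thesis using Gi False e0 by (simp add: G_def)
      qed
    next
      case False
      then have "\<forall>A\<in>sets M. A \<subseteq> X \<longrightarrow> \<psi> i A \<le> 0" using sgn[OF ir] ir by (auto simp: P_def)
      then show ?thesis using Gj False e0 by (simp add: G_def)
    qed
  qed
  ultimately show ?thesis by blast
qed

end
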